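(* Let $\Lambda$ be a row-finite $k$-graph with no sources, and let $\{t_\lambda\}_{\lambda\in\Lambda}$ and $\{\tilde t_\lambda\}_{\lambda\in\Lambda}$ be purely atomic representations of $C^*(\Lambda)$ on Hilbert spaces $\mathcal H$ and $\mathcal H'$, with associated projection valued measures $P$ and $\tilde P$. Suppose $U:\mathcal H\to\mathcal H'$ is a bounded operator with $\tilde t_\lambda U=Ut_\lambda$ and $\tilde t_\lambda^*U=Ut_\lambda^*$ for all $\lambda\in\Lambda$. Then $\tilde P(\{\omega\})U=UP(\{\omega\})$ for every $\omega\in\Lambda^\infty$. Moreover, if $U$ is unitary, then the supports $\{\omega:P(\{\omega\})\neq0\}$ and $\{\omega:\tilde P(\{\omega\})\neq0\}$ coincide.
   Context: A $k$-graph ($k\ge1$) is a countable small category $\Lambda$ with a functor $d:\Lambda\to\mathbb N^k$ satisfying unique factorization: if $d(\lambda)=m+n$ there are unique $\mu,\nu$ with $\lambda=\mu\nu$, $d(\mu)=m$, $d(\nu)=n$. $\Lambda^0$ = vertices, $r,s$ = range, source, $v\Lambda^n=\{\lambda:d(\lambda)=n,r(\lambda)=v\}$; row-finite: each $v\Lambda^n$ finite; no sources: each $v\Lambda^n$ nonempty. Infinite paths are degree-preserving functors $x:\Omega_k\to\Lambda$, where $\Omega_k$ has objects $\mathbb N^k$, morphisms $(p,q)$ with $p\le q$ and $d(p,q)=q-p$; $\Lambda^\infty$ is the set of them. Cylinder sets $Z(\lambda)=\{x:x(0,d(\lambda))=\lambda\}$ generate the Borel $\sigma$-algebra. A representation of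 $C^*(\Lambda)$ is a family of partial isometries $\{t_\lambda\}$ satisfying (CK1) $\{t_v\}_{v\in\Lambda^0}$ mutually orthogonal projections, (CK2) $t_\lambda t_\eta=t_{\lambda\eta}$ when $s(\lambda)=r(\eta)$, (CK3) $t_\lambda^*t_\lambda=t_{s(\lambda)}$, (CK4) $t_v=\sum_{\lambda\in v\Lambda^n}t_\lambda t_\lambda^*$. Its projection valued measure $P$ on Borel sets of $\Lambda^\infty$ satisfies $P(Z(\lambda))=t_\lambda t_\lambda^*$. Purely atomic: there is a Borel $\Omega$ with $P(\Lambda^\infty\setminus\Omega)=0$, $P(\{\omega\})\ne0$ for $\omega\in\Omega$, $\sum_{\omega\in\Omega}P(\{\omega\})=\mathrm{Id}$ strongly. *)

theory Defs
  imports "HOL-Analysis.Analysis"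
begin

text \<open>A complex Hilbert space is encoded as a real Hilbert space (real inner product =
  real part of the complex inner product, complete) together with the operator of
  multiplication by the imaginary unit, which is a real-linear isometry squaring to -1.\<close>

class complex_hilbert = real_inner + complete_space +
  fixes imult :: "'a \<Rightarrow> 'a"
  assumes imult_add: "imult (x + y) = imult x + imult y"
    and imult_scaleR: "imult (r *\<^sub>R x) = r *\<^sub>R imult x"
    and imult_imult: "imult (imult x) = - x"
    and inner_imult: "inner (imult x) (imult y) = inner x y"

text \<open>Bounded complex-linear operators; the Hilbert-space adjoint is the library's
  \<open>adjoint\<close> (for complex-linear maps the real adjoint is the complex adjoint).\<close>

definition cbounded :: "('a::complex_hilbert \<Rightarrow> 'b::complex_hilbert) \<Rightarrow> bool" where
  "cbounded T \<longleftrightarrow> bounded_linear T \<and> (\<forall>x. T (imult x) = imult (T x))"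

definition is_projection :: "('a::complex_hilbert \<Rightarrow> 'a) \<Rightarrow> bool" where
  "is_projection p \<longleftrightarrow> cbounded p \<and> p \<circ> p = p \<and> adjoint p = p"

definition partial_isometry :: "('a::complex_hilbert \<Rightarrow> 'b::complex_hilbert) \<Rightarrow> bool" where
  "partial_isometry T \<longleftrightarrow> cbounded T \<and> T \<circ> adjoint T \<circ> T = T"

definition unitary :: "('a::complex_hilbert \<Rightarrow> 'b::complex_hilbert) \<Rightarrow> bool" where
  "unitary U \<longleftrightarrow> cbounded U \<and> adjoint U \<circ> U = id \<and> U \<circ> adjoint U = id"

text \<open>\<open>\<nat>\<^sup>k\<close> is represented by functions \<open>nat \<Rightarrow> nat\<close> vanishing from index k on.\<close>

definition Nk :: "nat \<Rightarrow> (nat \<Rightarrow> nat) set" where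
  "Nk k = {n. \<forall>i\<ge>k. n i = 0}"

text \<open>A small category given by its set of morphisms; objects are identified with their
  identity morphisms, so \<open>rg\<close>/\<open>sr\<close> return identity morphisms; \<open>comp \<lambda> \<mu>\<close> is
  defined when \<open>sr \<lambda> = rg \<mu>\<close>.\<close>

record 'p kgraph =
  Arr  :: "'p set"
  rg   :: "'p \<Rightarrow> 'p"
  sr   :: "'p \<Rightarrow> 'p"
  comp :: "'p \<Rightarrow> 'p \<Rightarrow> 'p"
  deg  :: "'p \<Rightarrow> nat \<Rightarrow> nat"

definition verts :: "'p kgraph \<Rightarrow> 'p set" where
  "verts G = rg G ` Arr G"

definition is_kgraph :: "nat \<Rightarrow> 'p kgraph \<Rightarrow> bool" where
  "is_kgraph k G \<longleftrightarrow>
     countable (Arr G) \<and>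
     (\<forall>l\<in>Arr G. rg G l \<in> Arr G \<and> sr G l \<in> Arr G) \<and>
     (\<forall>l\<in>Arr G. rg G (rg G l) = rg G l \<and> sr G (rg G l) = rg G l \<and>
                 rg G (sr G l) = sr G l \<and> sr G (sr G l) = sr G l) \<and>
     (\<forall>l\<in>Arr G. comp G (rg G l) l = l \<and> comp G l (sr G l) = l) \<and>
     (\<forall>l\<in>Arr G. \<forall>m\<in>Arr G. sr G l = rg G m \<longrightarrow>
        comp G l m \<in> Arr G \<and> rg G (comp G l m) = rg G l \<and> sr G (comp G l m) = sr G m) \<and>
     (\<forall>l\<in>Arr G. \<forall>m\<in>Arr G. \<forall>n\<in>Arr G. sr G l = rg G m \<and> sr G m = rg G n \<longrightarrow>
        comp G (comp G l m) n = comp G l (comp G m n)) \<and>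
     (\<forall>l\<in>Arr G. deg G l \<in> Nk k) \<and>
     (\<forall>v\<in>verts G. deg G v = (\<lambda>_. 0)) \<and>
     (\<forall>l\<in>Arr G. \<forall>m\<in>Arr G. sr G l = rg G m \<longrightarrow>
        deg G (comp G l m) = (\<lambda>i. deg G l i + deg G m i)) \<and>
     (\<forall>l\<in>Arr G. \<forall>m n. deg G l = (\<lambda>i. m i + n i) \<longrightarrow>
        (\<exists>!p. fst p \<in> Arr G \<and> snd p \<in> Arr G \<and> sr G (fst p) = rg G (snd p) \<and>
              comp G (fst p) (snd p) = l \<and> deg G (fst p) = m \<and> deg G (snd p) = n))"

definition vLn :: "'p kgraph \<Rightarrow> 'p \<Rightarrow> (nat \<Rightarrow> nat) \<Rightarrow> 'p set" where
  "vLn G v n = {l \<in> Arr G. deg G l = n \<and> rg G l = v}"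

definition row_finite :: "nat \<Rightarrow> 'p kgraph \<Rightarrow> bool" where
  "row_finite k G \<longleftrightarrow> (\<forall>v\<in>verts G. \<forall>n\<in>Nk k. finite (vLn G v n))"

definition no_sources :: "nat \<Rightarrow> 'p kgraph \<Rightarrow> bool" where
  "no_sources k G \<longleftrightarrow> (\<forall>v\<in>verts G. \<forall>n\<in>Nk k. vLn G v n \<noteq> {})"

text \<open>Infinite paths: degree preserving functors \<open>\<Omega>\<^sub>k \<rightarrow> \<Lambda>\<close>, the morphism \<open>(p,q)\<close>
  of \<open>\<Omega>\<^sub>k\<close> being sent to \<open>x p q\<close>; extensional (\<open>undefined\<close> off the morphisms of \<open>\<Omega>\<^sub>k\<close>).\<close>

type_synonym 'p ipath = "(nat \<Rightarrow> nat) \<Rightarrow> (nat \<Rightarrow> nat) \<Rightarrow> 'p"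

definition kpaths :: "nat \<Rightarrow> 'p kgraph \<Rightarrow> 'p ipath set" where
  "kpaths k G = {x.
     (\<forall>p q. \<not> (p \<in> Nk k \<and> q \<in> Nk k \<and> p \<le> q) \<longrightarrow> x p q = undefined) \<and>
     (\<forall>p\<in>Nk k. \<forall>q\<in>Nk k. p \<le> q \<longrightarrow>
        x p q \<in> Arr G \<and> deg G (x p q) = (\<lambda>i. q i - p i) \<and>
        rg G (x p q) = x p p \<and> sr G (x p q) = x q q) \<and>
     (\<forall>p\<in>Nk k. \<forall>q\<in>Nk k. \<forall>m\<in>Nk k. p \<le> q \<and> q \<le> m \<longrightarrow>
        x p m = comp G (x p q) (x q m))}"

definition cyl :: "nat \<Rightarrow> 'p kgraph \<Rightarrow> 'p \<Rightarrow> 'p ipath set" where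
  "cyl k G l = {x \<in> kpaths k G. x (\<lambda>_. 0) (deg G l) = l}"

definition kborel :: "nat \<Rightarrow> 'p kgraph \<Rightarrow> 'p ipath set set" where
  "kborel k G = sigma_sets (kpaths k G) (cyl k G ` Arr G)"

definition ck_rep :: "nat \<Rightarrow> 'p kgraph \<Rightarrow> ('p \<Rightarrow> 'h::complex_hilbert \<Rightarrow> 'h) \<Rightarrow> bool" where
  "ck_rep k G t \<longleftrightarrow>
     (\<forall>l\<in>Arr G. partial_isometry (t l)) \<and>
     (\<forall>v\<in>verts G. is_projection (t v)) \<and>
     (\<forall>v\<in>verts G. \<forall>w\<in>verts G. v \<noteq> w \<longrightarrow> t v \<circ> t w = (\<lambda>_. 0)) \<and>
     (\<forall>l\<in>Arr G. \<forall>m\<in>Arr G. sr G l = rg G m \<longrightarrow> t (comp G l m) = t l \<circ> t m) \<and>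
     (\<forall>l\<in>Arr G. adjoint (t l) \<circ> t l = t (sr G l)) \<and>
     (\<forall>v\<in>verts G. \<forall>n\<in>Nk k. t v = (\<lambda>x. \<Sum>l\<in>vLn G v n. t l (adjoint (t l) x)))"

definition is_pvm :: "'x set \<Rightarrow> 'x set set \<Rightarrow> ('x set \<Rightarrow> 'h::complex_hilbert \<Rightarrow> 'h) \<Rightarrow> bool" where
  "is_pvm X M P \<longleftrightarrow>
     (\<forall>A\<in>M. is_projection (P A)) \<and>
     P {} = (\<lambda>_. 0) \<and> P X = id \<and>
     (\<forall>A\<in>M. \<forall>B\<in>M. P (A \<inter> B) = P A \<circ> P B) \<and>
     (\<forall>A :: nat \<Rightarrow> 'x set. range A \<subseteq> M \<longrightarrow> disjoint_family A \<longrightarrow>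
        (\<forall>x. (\<lambda>n. \<Sum>i<n. P (A i) x) \<longlonglongrightarrow> P (\<Union>i. A i) x))"

definition rep_pvm :: "nat \<Rightarrow> 'p kgraph \<Rightarrow> ('p \<Rightarrow> 'h::complex_hilbert \<Rightarrow> 'h)
                        \<Rightarrow> ('p ipath set \<Rightarrow> 'h \<Rightarrow> 'h) \<Rightarrow> bool" where
  "rep_pvm k G t P \<longleftrightarrow> is_pvm (kpaths k G) (kborel k G) P \<and>
     (\<forall>l\<in>Arr G. P (cyl k G l) = t l \<circ> adjoint (t l))"

definition purely_atomic :: "nat \<Rightarrow> 'p kgraph \<Rightarrow> ('p ipath set \<Rightarrow> 'h::complex_hilbert \<Rightarrow> 'h) \<Rightarrow> bool" where
  "purely_atomic k G P \<longleftrightarrow>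
     (\<exists>\<Omega>\<in>kborel k G. P (kpaths k G - \<Omega>) = (\<lambda>_. 0) \<and>
        (\<forall>\<omega>\<in>\<Omega>. P {\<omega>} \<noteq> (\<lambda>_. 0)) \<and>
        (\<forall>x. ((\<lambda>\<omega>. P {\<omega>} x) has_sum x) \<Omega>))"

end

theory Submission
  imports Defs
begin

lemma pvm_add:
  assumes pv: "is_pvm X M P" and e: "{} \<in> M" and A: "A \<in> M" and B: "B \<in> M"
    and d: "A \<inter> B = {}"
  shows "P (A \<union> B) x = P A x + P B x"
proof -
  define F where "F = (\<lambda>i::nat. if i = 0 then A else if i = 1 then B else {})"
  have r: "range F \<subseteq> M" using e A B by (auto simp: F_def)
  have df: "disjoint_family F" using d unfolding disjoint_family_on_def F_def by auto
  have un: "(\<Union>i. F i) = A \<union> B"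
  proof
    show "(\<Union>i. F i) \<subseteq> A \<union> B" by (auto simp: F_def split: if_splits)
    show "A \<union> B \<subseteq> (\<Union>i. F i)"
    proof
      fix y assume "y \<in> A \<union> B"
      then show "y \<in> (\<Union>i. F i)"
      proof
        assume "y \<in> A" then have "y \<in> F 0" by (simp add: F_def) then show ?thesis by blast
      next
        assume "y \<in> B" then have "y \<in> F 1" by (simp add: F_def) then show ?thesis by blast
      qed
    qed
  qed
  have P0: "P {} = (\<lambda>_. 0)" using pv by (simp add: is_pvm_def)
  have lim: "(\<lambda>n. \<Sum>i<n. P (F i) x) \<longlonglongrightarrow> P (A \<union> B) x"
    using pv r df un unfolding is_pvm_def by metis
  have s: "(\<Sum>i<Suc (Suc n). P (F i) x) = P A x + P B x" for n
  proof (induction n)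
    case 0 then show ?case by (simp add: F_def)
  next
    case (Suc n) then show ?case by (simp add: F_def P0)
  qed
  have "(\<lambda>n. \<Sum>i<Suc (Suc n). P (F i) x) \<longlonglongrightarrow> P (A \<union> B) x"
    by (rule LIMSEQ_Suc[OF LIMSEQ_Suc[OF lim]])
  then have "(\<lambda>n. P A x + P B x) \<longlonglongrightarrow> P (A \<union> B) x" by (simp only: s)
  then show ?thesis using LIMSEQ_unique tendsto_const by blast
qed

lemma pvm_dec:
  assumes pv: "is_pvm X M P" and e: "{} \<in> M" and BM: "\<And>n. B n \<in> M"
    and dec: "\<And>n. B (Suc n) \<subseteq> B n" and S: "(\<Inter>n. B n) = S" and SM: "S \<in> M"
    and DM: "\<And>n. B n - B (Suc n) \<in> M"
  shows "(\<lambda>n. P (B n) x) \<longlonglongrightarrow> P S x"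
proof -
  have ds: "decseq B" using dec by (simp add: decseq_Suc_iff)
  define E where "E = (\<lambda>i. if i = 0 then S else B (i - 1) - B i)"
  have E0: "E 0 = S" and ES: "\<And>i. E (Suc i) = B i - B (Suc i)" by (auto simp: E_def)
  have "E i \<in> M" for i by (cases i) (simp_all add: E0 ES SM DM)
  then have r: "range E \<subseteq> M" by blast
  have SB: "S \<subseteq> B n" for n using S by blast
  have df: "disjoint_family E"
    unfolding disjoint_family_on_def
  proof (intro ballI impI)
    fix i j :: nat assume "i \<noteq> j"
    show "E i \<inter> E j = {}"
    proof (cases i)
      case 0
      with \<open>i \<noteq> j\<close> obtain j' where "j = Suc j'" by (cases j) auto
      then show ?thesis using 0 SB[of "Suc j'"] by (auto simp: E0 ES)
    next
      case (Suc i')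
      show ?thesis
      proof (cases j)
        case 0 then show ?thesis using Suc SB[of "Suc i'"] by (auto simp: E0 ES)
      next
        case (Suc j')
        have "i' \<noteq> j'" using \<open>i \<noteq> j\<close> \<open>i = Suc i'\<close> Suc by simp
        then have "i' < j' \<or> j' < i'" by arith
        then show ?thesis
        proof
          assume "i' < j'" then have "B j' \<subseteq> B (Suc i')" using ds by (simp add: decseq_def)
          then show ?thesis using \<open>i = Suc i'\<close> Suc by (auto simp: ES)
        next
          assume "j' < i'" then have "B i' \<subseteq> B (Suc j')" using ds by (simp add: decseq_def)
          then show ?thesis using \<open>i = Suc i'\<close> Suc by (auto simp: ES)
        qed
      qed
    qed
  qed
  have un: "(\<Union>i. E i) = B 0"
  proof
    show "(\<Union>i. E i) \<subseteq> B 0"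
    proof
      fix y assume "y \<in> (\<Union>i. E i)"
      then obtain i where "y \<in> E i" by blast
      then show "y \<in> B 0"
      proof (cases i)
        case 0 then show ?thesis using \<open>y \<in> E i\<close> SB[of 0] E0 by auto
      next
        case (Suc i') then have "y \<in> B i'" using \<open>y \<in> E i\<close> ES by auto
        then show ?thesis using ds by (auto simp: decseq_def)
      qed
    qed
    show "B 0 \<subseteq> (\<Union>i. E i)"
    proof
      fix y assume y0: "y \<in> B 0"
      show "y \<in> (\<Union>i. E i)"
      proof (rule ccontr)
        assume nu: "y \<notin> (\<Union>i. E i)"
        have "y \<in> B n" for n
        proof (induction n)
          case 0 then show ?case using y0 .
        next
          case (Suc n) then show ?case using nu ES[of n] by blast
        qed
        then have "y \<in> S" using S by blast
        then show False using nu E0 by blast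
      qed
    qed
  qed
  have lim: "(\<lambda>n. \<Sum>i<n. P (E i) x) \<longlonglongrightarrow> P (B 0) x"
    using pv r df un unfolding is_pvm_def by metis
  have step: "P (B n - B (Suc n)) x = P (B n) x - P (B (Suc n)) x" for n
  proof -
    have "B n = (B n - B (Suc n)) \<union> B (Suc n)" using dec[of n] by blast
    then have "P (B n) x = P (B n - B (Suc n)) x + P (B (Suc n)) x"
      using pvm_add[OF pv e DM BM, of n "Suc n" x] by auto
    then show ?thesis by (simp add: algebra_simps)
  qed
  have s: "(\<Sum>i<Suc n. P (E i) x) = P S x + (P (B 0) x - P (B n) x)" for n
  proof (induction n)
    case 0 then show ?case by (simp add: E0)
  next
    case (Suc n)
    have "(\<Sum>i<Suc (Suc n). P (E i) x) = (\<Sum>i<Suc n. P (E i) x) + P (E (Suc n)) x" by simp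
    also have "\<dots> = P S x + (P (B 0) x - P (B n) x) + (P (B n) x - P (B (Suc n)) x)"
      using Suc step[of n] by (simp add: ES)
    finally show ?case by (simp add: algebra_simps)
  qed
  have "(\<lambda>n. \<Sum>i<Suc n. P (E i) x) \<longlonglongrightarrow> P (B 0) x" by (rule LIMSEQ_Suc[OF lim])
  then have l2: "(\<lambda>n. P S x + (P (B 0) x - P (B n) x)) \<longlonglongrightarrow> P (B 0) x" by (simp only: s)
  have "(\<lambda>n. P S x + P (B 0) x - (P S x + (P (B 0) x - P (B n) x))) \<longlonglongrightarrow> P S x + P (B 0) x - P (B 0) x"
    by (intro tendsto_diff tendsto_const l2)
  then show ?thesis by (simp add: algebra_simps)
qed

lemma kp_arr:
  assumes "x \<in> kpaths k G" "p \<in> Nk k" "q \<in> Nk k" "p \<le> q"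
  shows "x p q \<in> Arr G \<and> deg G (x p q) = (\<lambda>i. q i - p i) \<and> rg G (x p q) = x p p \<and> sr G (x p q) = x q q"
proof -
  have "\<forall>p\<in>Nk k. \<forall>q\<in>Nk k. p \<le> q \<longrightarrow>
        x p q \<in> Arr G \<and> deg G (x p q) = (\<lambda>i. q i - p i) \<and>
        rg G (x p q) = x p p \<and> sr G (x p q) = x q q"
    using assms(1) unfolding kpaths_def mem_Collect_eq by (rule conjunct1[OF conjunct2])
  then show ?thesis using assms(2-4) by blast
qed

lemma kp_comp:
  assumes "x \<in> kpaths k G" "p \<in> Nk k" "q \<in> Nk k" "m \<in> Nk k" "p \<le> q" "q \<le> m"
  shows "x p m = comp G (x p q) (x q m)"
proof -
  have "\<forall>p\<in>Nk k. \<forall>q\<in>Nk k. \<forall>m\<in>Nk k. p \<le> q \<and> q \<le> m \<longrightarrow>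
        x p m = comp G (x p q) (x q m)"
    using assms(1) unfolding kpaths_def mem_Collect_eq by (rule conjunct2[OF conjunct2])
  then show ?thesis using assms(2-6) by blast
qed

lemma kp_undef:
  assumes "x \<in> kpaths k G" "\<not> (p \<in> Nk k \<and> q \<in> Nk k \<and> p \<le> q)"
  shows "x p q = undefined"
proof -
  have "\<forall>p q. \<not> (p \<in> Nk k \<and> q \<in> Nk k \<and> p \<le> q) \<longrightarrow> x p q = undefined"
    using assms(1) unfolding kpaths_def mem_Collect_eq by (rule conjunct1)
  then show ?thesis using assms(2) by blast
qed

lemma factor_uniq:
  assumes G: "is_kgraph k G" and l: "l \<in> Arr G" and dl: "deg G l = (\<lambda>i. a i + b i)"
    and "f1 \<in> Arr G" "g1 \<in> Arr G" "sr G f1 = rg G g1" "comp G f1 g1 = l" "deg G f1 = a" "deg G g1 = b"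
    and "f2 \<in> Arr G" "g2 \<in> Arr G" "sr G f2 = rg G g2" "comp G f2 g2 = l" "deg G f2 = a" "deg G g2 = b"
  shows "f1 = f2 \<and> g1 = g2"
proof -
  have "\<exists>!p. fst p \<in> Arr G \<and> snd p \<in> Arr G \<and> sr G (fst p) = rg G (snd p) \<and>
              comp G (fst p) (snd p) = l \<and> deg G (fst p) = a \<and> deg G (snd p) = b"
    using G l dl unfolding is_kgraph_def by blast
  then obtain p0 where u: "\<And>p. fst p \<in> Arr G \<and> snd p \<in> Arr G \<and> sr G (fst p) = rg G (snd p) \<and>
              comp G (fst p) (snd p) = l \<and> deg G (fst p) = a \<and> deg G (snd p) = b \<Longrightarrow> p = p0"
    by (metis ex1E)
  have "(f1, g1) = p0" by (rule u) (use assms in simp)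
  moreover have "(f2, g2) = p0" by (rule u) (use assms in simp)
  ultimately have "(f1, g1) = (f2, g2)" by simp
  then show ?thesis by simp
qed

lemma path_eq:
  assumes G: "is_kgraph k G" and x: "x \<in> kpaths k G" and y: "y \<in> kpaths k G"
    and eq: "\<And>n. x (\<lambda>_. 0) (\<lambda>i. if i < k then n else 0) = y (\<lambda>_. 0) (\<lambda>i. if i < k then n else 0)"
  shows "x = y"
proof (intro ext)
  fix p q :: "nat \<Rightarrow> nat"
  show "x p q = y p q"
  proof (cases "p \<in> Nk k \<and> q \<in> Nk k \<and> p \<le> q")
    case False then show ?thesis using kp_undef[OF x] kp_undef[OF y] by metis
  next
    case True
    then have pN: "p \<in> Nk k" and qN: "q \<in> Nk k" and pq: "p \<le> q" by auto
    define z where "z = (\<lambda>_::nat. 0::nat)"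
    define n where "n = (\<Sum>i<k. q i)"
    define m where "m = (\<lambda>i. if i < k then n else (0::nat))"
    have zN: "z \<in> Nk k" by (simp add: Nk_def z_def)
    have mN: "m \<in> Nk k" by (simp add: Nk_def m_def)
    have qm: "q \<le> m" unfolding le_fun_def
    proof
      fix i show "q i \<le> m i"
      proof (cases "i < k")
        case True then have "q i \<le> n" unfolding n_def by (intro member_le_sum) auto
        then show ?thesis using True by (simp add: m_def)
      next
        case False then show ?thesis using qN by (simp add: Nk_def m_def)
      qed
    qed
    have pm: "p \<le> m" using pq qm by (rule order_trans)
    have zp: "z \<le> p" by (simp add: z_def le_fun_def)
    have zm: "z \<le> m" using zp pm by (rule order_trans)
    have exy: "x z m = y z m" using eq[of n] by (simp add: z_def m_def)
    note X1 = kp_arr[OF x zN pN zp]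
    note X2 = kp_arr[OF x pN mN pm]
    note Y1 = kp_arr[OF y zN pN zp]
    note Y2 = kp_arr[OF y pN mN pm]
    note XL = kp_arr[OF x zN mN zm]
    have pmle: "\<And>i. p i \<le> m i" using pm by (simp add: le_fun_def)
    have qmle: "\<And>i. q i \<le> m i" using qm by (simp add: le_fun_def)
    have pqle: "\<And>i. p i \<le> q i" using pq by (simp add: le_fun_def)
    have dL: "deg G (x z m) = (\<lambda>i. p i + (m i - p i))" using XL pmle by (simp add: z_def)
    have c1: "x z m = comp G (x z p) (x p m)" by (rule kp_comp[OF x zN pN mN zp pm])
    have c2: "y z m = comp G (y z p) (y p m)" by (rule kp_comp[OF y zN pN mN zp pm])
    have dz1: "deg G (x z p) = p" using X1 by (simp add: z_def)
    have dz2: "deg G (y z p) = p" using Y1 by (simp add: z_def)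
    have "x z p = y z p \<and> x p m = y p m"
    proof (rule factor_uniq[OF G _ dL])
      show "x z m \<in> Arr G" using XL by blast
      show "x z p \<in> Arr G" "x p m \<in> Arr G" "y z p \<in> Arr G" "y p m \<in> Arr G"
        using X1 X2 Y1 Y2 by blast+
      show "sr G (x z p) = rg G (x p m)" "sr G (y z p) = rg G (y p m)"
        using X1 X2 Y1 Y2 by simp_all
      show "comp G (x z p) (x p m) = x z m" "comp G (y z p) (y p m) = x z m"
        using c1 c2 exy by simp_all
      show "deg G (x z p) = p" "deg G (y z p) = p" by (rule dz1, rule dz2)
      show "deg G (x p m) = (\<lambda>i. m i - p i)" "deg G (y p m) = (\<lambda>i. m i - p i)"
        using X2 Y2 by simp_all
    qed
    then have epm: "x p m = y p m" by simp
    note X3 = kp_arr[OF x pN qN pq]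
    note X4 = kp_arr[OF x qN mN qm]
    note Y3 = kp_arr[OF y pN qN pq]
    note Y4 = kp_arr[OF y qN mN qm]
    have dL2: "deg G (x p m) = (\<lambda>i. (q i - p i) + (m i - q i))"
      using X2 pqle qmle by (simp add: fun_eq_iff)
    have c3: "x p m = comp G (x p q) (x q m)" by (rule kp_comp[OF x pN qN mN pq qm])
    have c4: "y p m = comp G (y p q) (y q m)" by (rule kp_comp[OF y pN qN mN pq qm])
    have "x p q = y p q \<and> x q m = y q m"
    proof (rule factor_uniq[OF G _ dL2])
      show "x p m \<in> Arr G" using X2 by blast
      show "x p q \<in> Arr G" "x q m \<in> Arr G" "y p q \<in> Arr G" "y q m \<in> Arr G"
        using X3 X4 Y3 Y4 by blast+
      show "sr G (x p q) = rg G (x q m)" "sr G (y p q) = rg G (y q m)"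
        using X3 X4 Y3 Y4 by simp_all
      show "comp G (x p q) (x q m) = x p m" "comp G (y p q) (y q m) = x p m"
        using c3 c4 epm by simp_all
      show "deg G (x p q) = (\<lambda>i. q i - p i)" "deg G (y p q) = (\<lambda>i. q i - p i)"
        using X3 Y3 by simp_all
      show "deg G (x q m) = (\<lambda>i. m i - q i)" "deg G (y q m) = (\<lambda>i. m i - q i)"
        using X4 Y4 by simp_all
    qed
    then show "x p q = y p q" by simp
  qed
qed

theorem proposition3p7:
  fixes k :: nat and G :: "'p kgraph"
    and t :: "'p \<Rightarrow> 'h::complex_hilbert \<Rightarrow> 'h"
    and t' :: "'p \<Rightarrow> 'g::complex_hilbert \<Rightarrow> 'g"
    and P :: "'p ipath set \<Rightarrow> 'h \<Rightarrow> 'h"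
    and P' :: "'p ipath set \<Rightarrow> 'g \<Rightarrow> 'g"
    and U :: "'h \<Rightarrow> 'g"
  assumes "k \<ge> 1" and "is_kgraph k G" and "row_finite k G" and "no_sources k G"
    and "ck_rep k G t" and "ck_rep k G t'"
    and "rep_pvm k G t P" and "rep_pvm k G t' P'"
    and "purely_atomic k G P" and "purely_atomic k G P'"
    and "cbounded U"
    and "\<forall>l\<in>Arr G. t' l \<circ> U = U \<circ> t l"
    and "\<forall>l\<in>Arr G. adjoint (t' l) \<circ> U = U \<circ> adjoint (t l)"
  shows "(\<forall>\<omega>\<in>kpaths k G. P' {\<omega>} \<circ> U = U \<circ> P {\<omega>}) \<and>
         (unitary U \<longrightarrow>
            {\<omega>\<in>kpaths k G. P {\<omega>} \<noteq> (\<lambda>_. 0)} = {\<omega>\<in>kpaths k G. P' {\<omega>} \<noteq> (\<lambda>_. 0)})"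
proof -
  note G = assms(2)
  have pv: "is_pvm (kpaths k G) (kborel k G) P" and cylP: "\<And>l. l\<in>Arr G \<Longrightarrow> P (cyl k G l) = t l \<circ> adjoint (t l)"
    using assms(7) by (auto simp: rep_pvm_def)
  have pv': "is_pvm (kpaths k G) (kborel k G) P'" and cylP': "\<And>l. l\<in>Arr G \<Longrightarrow> P' (cyl k G l) = t' l \<circ> adjoint (t' l)"
    using assms(8) by (auto simp: rep_pvm_def)
  have blU: "bounded_linear U" using assms(11) by (simp add: cbounded_def)
  have sa: "sigma_algebra (kpaths k G) (kborel k G)"
    unfolding kborel_def by (rule sigma_algebra_sigma_sets) (auto simp: cyl_def)
  interpret S: sigma_algebra "kpaths k G" "kborel k G" by (rule sa)
  have cylM: "cyl k G l \<in> kborel k G" if "l \<in> Arr G" for l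
    unfolding kborel_def using that by (intro sigma_sets.Basic) auto
  have tU: "t' l (U y) = U (t l y)" if "l \<in> Arr G" for l y
    using assms(12) that by (metis comp_apply)
  have aU: "adjoint (t' l) (U y) = U (adjoint (t l) y)" if "l \<in> Arr G" for l y
    using assms(13) that by (metis comp_apply)
  have ccyl: "P' (cyl k G l) (U y) = U (P (cyl k G l) y)" if "l \<in> Arr G" for l y
    using that by (simp add: cylP cylP' tU aU)
  have main: "P' {\<omega>} \<circ> U = U \<circ> P {\<omega>}" if om: "\<omega> \<in> kpaths k G" for \<omega>
  proof -
    define z where "z = (\<lambda>_::nat. 0::nat)"
    define c where "c = (\<lambda>n::nat. \<lambda>i. if i < k then n else (0::nat))"
    define C where "C = (\<lambda>n. cyl k G (\<omega> z (c n)))"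
    define B where "B = (\<lambda>n. \<Inter>m\<in>{..n}. C m)"
    have zN: "z \<in> Nk k" by (simp add: Nk_def z_def)
    have cN: "c n \<in> Nk k" for n by (simp add: Nk_def c_def)
    have zc: "z \<le> c n" for n by (simp add: z_def le_fun_def)
    have la: "\<omega> z (c n) \<in> Arr G" and dla: "deg G (\<omega> z (c n)) = c n" for n
      using kp_arr[OF om zN cN zc, of n] by (simp_all add: z_def)
    have CM: "C n \<in> kborel k G" for n unfolding C_def by (rule cylM[OF la])
    have Ceq: "C n = {x\<in>kpaths k G. x z (c n) = \<omega> z (c n)}" for n
      unfolding C_def cyl_def using dla by (simp add: z_def)
    have BM: "B n \<in> kborel k G" for n
      unfolding B_def by (rule S.countable_INT') (use CM in auto)
    have BSuc: "B (Suc n) = B n \<inter> C (Suc n)" for n by (auto simp: B_def atMost_Suc)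
    have Bdec: "B (Suc n) \<subseteq> B n" for n by (auto simp: BSuc)
    have BD: "B n - B (Suc n) \<in> kborel k G" for n using BM by blast
    have omC: "\<omega> \<in> C n" for n using Ceq om by simp
    have int: "(\<Inter>n. B n) = {\<omega>}"
    proof
      show "{\<omega>} \<subseteq> (\<Inter>n. B n)" using omC by (auto simp: B_def)
      show "(\<Inter>n. B n) \<subseteq> {\<omega>}"
      proof
        fix y assume "y \<in> (\<Inter>n. B n)"
        then have "y \<in> C n" for n by (auto simp: B_def)
        then have yk: "y \<in> kpaths k G" and ye: "\<And>n. y z (c n) = \<omega> z (c n)" using Ceq by auto
        have "y = \<omega>" by (rule path_eq[OF G yk om]) (use ye in \<open>simp add: z_def c_def\<close>)
        then show "y \<in> {\<omega>}" by simp
      qed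
    qed
    have sM: "{\<omega>} \<in> kborel k G"
    proof -
      have "(\<Inter>n. B n) \<in> kborel k G" by (rule S.countable_INT) (use BM in auto)
      then show ?thesis using int by simp
    qed
    have eM: "{} \<in> kborel k G" by (rule S.empty_sets)
    have commB: "P' (B n) (U y) = U (P (B n) y)" for n y
    proof (induction n arbitrary: y)
      case 0
      have "B 0 = C 0" by (simp add: B_def)
      then show ?case by (simp add: C_def ccyl la)
    next
      case (Suc n)
      have m1: "P (B (Suc n)) = P (B n) \<circ> P (C (Suc n))"
        using pv BM CM unfolding is_pvm_def BSuc by blast
      have m2: "P' (B (Suc n)) = P' (B n) \<circ> P' (C (Suc n))"
        using pv' BM CM unfolding is_pvm_def BSuc by blast
      show ?case by (simp add: m1 m2 Suc C_def ccyl la)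
    qed
    show ?thesis
    proof (rule ext)
      fix y
      have l1: "(\<lambda>n. P' (B n) (U y)) \<longlonglongrightarrow> P' {\<omega>} (U y)"
        by (rule pvm_dec[OF pv' eM BM Bdec int sM BD])
      have l2: "(\<lambda>n. U (P (B n) y)) \<longlonglongrightarrow> U (P {\<omega>} y)"
        by (rule bounded_linear.tendsto[OF blU pvm_dec[OF pv eM BM Bdec int sM BD]])
      have "(\<lambda>n. P' (B n) (U y)) \<longlonglongrightarrow> U (P {\<omega>} y)" using l2 by (simp add: commB)
      then show "(P' {\<omega>} \<circ> U) y = (U \<circ> P {\<omega>}) y" using l1 LIMSEQ_unique by force
    qed
  qed
  have part2: "{\<omega>\<in>kpaths k G. P {\<omega>} \<noteq> (\<lambda>_. 0)} = {\<omega>\<in>kpaths k G. P' {\<omega>} \<noteq> (\<lambda>_. 0)}"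
    if un: "unitary U"
  proof -
    define V where "V = adjoint U"
    have VU: "V (U a) = a" for a using un unfolding unitary_def V_def by (metis comp_apply id_apply)
    have UV: "U (V a) = a" for a using un unfolding unitary_def V_def by (metis comp_apply id_apply)
    have U0: "U 0 = 0" using blU by (rule linear_simps(3))
    have mp: "P' {\<omega>} (U y) = U (P {\<omega>} y)" if "\<omega> \<in> kpaths k G" for \<omega> y
      using main[OF that] by (metis comp_apply)
    have "P {\<omega>} \<noteq> (\<lambda>_. 0) \<longleftrightarrow> P' {\<omega>} \<noteq> (\<lambda>_. 0)" if om: "\<omega> \<in> kpaths k G" for \<omega>
    proof
      assume h: "P {\<omega>} \<noteq> (\<lambda>_. 0)"
      show "P' {\<omega>} \<noteq> (\<lambda>_. 0)"
      proof
        assume h2: "P' {\<omega>} = (\<lambda>_. 0)"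
        have "P {\<omega>} y = 0" for y
        proof -
          have "U (P {\<omega>} y) = U 0" using mp[OF om, of y] h2 U0 by simp
          then have "V (U (P {\<omega>} y)) = V (U 0)" by simp
          then show ?thesis by (simp add: VU)
        qed
        then show False using h by auto
      qed
    next
      assume h: "P' {\<omega>} \<noteq> (\<lambda>_. 0)"
      show "P {\<omega>} \<noteq> (\<lambda>_. 0)"
      proof
        assume h2: "P {\<omega>} = (\<lambda>_. 0)"
        have "P' {\<omega>} y = 0" for y
          using mp[OF om, of "V y"] h2 U0 by (simp add: UV)
        then show False using h by auto
      qed
    qed
    then show ?thesis by blast
  qed
  show ?thesis using main part2 by blast
qed

end
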